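(* Let $\Omega\subset\mathbb{R}^2$ and let $\Omega^\diamond=\{(p,q)\in\mathbb{R}^{2*}\mid px-qy\ge1\ \forall(x,y)\in\Omega\}$ be its antipolar set. Let $\gamma\colon(-1,1)\to\mathbb{R}^{2*}$ be a continuously differentiable curve such that \[ \gamma(0)=\omega^\diamond\in\Omega^\diamond, \qquad \dot{\gamma}(0)\notin\{\lambda\omega^\diamond\mid \lambda\in\mathbb{R}\}. \] Assume that there exists $\delta>0$ such that for every $\alpha\in(0,\delta)$ \begin{enumerate} \item[---] $(1-\alpha)\omega^\diamond\in\Omega^\diamond,$ \item[---] $\gamma(-\alpha)\in\Omega^\diamond,\quad\gamma(\alpha)\in\Omega^\diamond$. \end{enumerate} Then $\omega^\diamond\in\mathrm{int}\,\Omega^\diamond$. Conversely, if there is a continuously differentiable curve $\gamma\colon(-1,1)\to\mathbb{R}^{2*}$ with $\gamma(0)=\omega^\diamond$ and $\dot{\gamma}(0)\notin\{\lambda\omega^\diamond\mid \lambda\in\mathbb{R}\}$ for which no such $\delta>0$ exists, then the point $\omega^\diamond$ lies on the boundary $\partial\Omega^\diamond$ of the antipolar set.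
   Context: $\Omega\subset\mathbb{R}^2$ is a non-empty, convex, closed set not containing the origin and satisfying the ray property $\lambda\Omega\subset\Omega$ for all $\lambda>1$ (Assumption (i)), and $\Omega$ is strictly separated from the origin, so that its antipolar set $\Omega^\diamond=\{(p,q)\in\mathbb{R}^{2*}\mid px-qy\ge1\ \forall(x,y)\in\Omega\}$ is non-empty, convex and closed and also satisfies Assumption (i). Here $\mathbb{R}^{2*}$ is the dual space of $\mathbb{R}^2$. *)

theory Defs
  imports "HOL-Analysis.Analysis"
begin

text \<open>Antipolar set of \<Omega> \<subseteq> R^2; elements of the dual space R^{2*} are represented as pairs (p,q),
  with the paper's pairing (p,q)(x,y) = p x - q y.\<close>
definition antipolar :: "(real \<times> real) set \<Rightarrow> (real \<times> real) set" where
  "antipolar \<Omega> = {(p, q). \<forall>(x, y) \<in> \<Omega>. p * x - q * y \<ge> 1}"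

end

theory Submission imports Defs begin

lemma deriv_inner:
  assumes "(\<gamma> has_vector_derivative v) (at 0)"
  shows "((\<lambda>t. (a::real\<times>real) \<bullet> \<gamma> t) has_real_derivative a \<bullet> v) (at 0)"
proof -
  have "(\<gamma> has_derivative (\<lambda>x. x *\<^sub>R v)) (at 0)"
    using assms by (simp add: has_vector_derivative_def)
  then have "((\<lambda>t. a \<bullet> \<gamma> t) has_derivative (\<lambda>x. a \<bullet> (x *\<^sub>R v))) (at 0)"
    by (rule has_derivative_inner_right)
  moreover have "(\<lambda>x. a \<bullet> (x *\<^sub>R v)) = (*) (a \<bullet> v)" by (auto simp: fun_eq_iff)
  ultimately show ?thesis
    by (simp add: has_field_derivative_def)
qed

lemma parallel2:
  fixes a1 a2 w1 w2 v1 v2 :: real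
  assumes "a1 * w1 + a2 * w2 = 0" "a1 * v1 + a2 * v2 = 0" "(a1,a2) \<noteq> 0" "(w1,w2) \<noteq> 0"
  shows "\<exists>c. (v1,v2) = c *\<^sub>R (w1,w2)"
proof -
  have "a1 * (w1 * v2 - w2 * v1) = 0"
  proof -
    have "a1 * (w1 * v2 - w2 * v1) = (a1 * w1) * v2 - (a1 * v1) * w2" by algebra
    also have "\<dots> = (- a2 * w2) * v2 - (- a2 * v2) * w2" using assms(1,2)
      by (metis add.commute add_eq_0_iff mult_minus_left)
    finally show ?thesis by simp
  qed
  moreover have "a2 * (w1 * v2 - w2 * v1) = 0"
  proof -
    have "a2 * (w1 * v2 - w2 * v1) = w1 * (a2 * v2) - (a2 * w2) * v1" by algebra
    also have "\<dots> = w1 * (- a1 * v1) - (- a1 * w1) * v1" using assms(1,2)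
      by (metis add_eq_0_iff mult_minus_left)
    finally show ?thesis by simp
  qed
  ultimately have d: "w1 * v2 = w2 * v1" using assms(3) by (auto simp: zero_prod_def)
  show ?thesis
  proof (cases "w1 = 0")
    case True
    then have "w2 \<noteq> 0" using assms(4) by (auto simp: zero_prod_def)
    then have "(v1,v2) = (v2/w2) *\<^sub>R (w1,w2)" using d True by (auto simp: field_simps)
    then show ?thesis by blast
  next
    case False
    then have "(v1,v2) = (v1/w1) *\<^sub>R (w1,w2)" using d by (auto simp: field_simps)
    then show ?thesis by blast
  qed
qed

lemma support:
  fixes A :: "(real\<times>real) set"
  assumes "convex A" "w \<in> A" "w \<notin> interior A"
  obtains a where "a \<noteq> 0" "\<And>y. y \<in> A \<Longrightarrow> a \<bullet> w \<le> a \<bullet> y"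
proof (cases "interior A = {}")
  case True
  obtain a b where ab: "a \<noteq> 0" "A \<subseteq> {x. a \<bullet> x = b}"
    by (rule empty_interior_subset_hyperplane[OF assms(1) True])
  show ?thesis
  proof (rule that[of a])
    show "a \<noteq> 0" by (rule ab(1))
    fix y assume "y \<in> A"
    then have "a \<bullet> y = b" "a \<bullet> w = b" using ab(2) assms(2) by blast+
    then show "a \<bullet> w \<le> a \<bullet> y" by simp
  qed
next
  case False
  then have ri: "rel_interior A = interior A" by (rule rel_interior_nonempty_interior)
  have c1: "w \<in> closure A" using assms(2) closure_subset by blast
  have c2: "w \<notin> rel_interior A" using assms(3) ri by simp
  obtain a where a1: "a \<noteq> 0" and a2: "\<And>y. y \<in> closure A \<Longrightarrow> a \<bullet> w \<le> a \<bullet> y"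
     and "\<And>y. y \<in> rel_interior A \<Longrightarrow> a \<bullet> w < a \<bullet> y"
    by (rule supporting_hyperplane_relative_frontier[OF assms(1) c1 c2]) blast
  show ?thesis
  proof (rule that[of a])
    show "a \<noteq> 0" by (rule a1)
    fix y assume "y \<in> A"
    then have "y \<in> closure A" using closure_subset by blast
    then show "a \<bullet> w \<le> a \<bullet> y" by (rule a2)
  qed
qed

lemma antipolar_eq: "antipolar \<Omega> = (\<Inter>z\<in>\<Omega>. {pq. 1 \<le> (fst z, - snd z) \<bullet> pq})"
proof -
  have "pq \<in> antipolar \<Omega> \<longleftrightarrow> (\<forall>z\<in>\<Omega>. 1 \<le> (fst z, - snd z) \<bullet> pq)" for pq :: "real\<times>real"
  proof -
    obtain p q where pq: "pq = (p,q)" by (cases pq)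
    have "pq \<in> antipolar \<Omega> \<longleftrightarrow> (\<forall>z\<in>\<Omega>. 1 \<le> p * fst z - q * snd z)"
      unfolding antipolar_def pq by (auto simp: case_prod_beta)
    also have "\<dots> \<longleftrightarrow> (\<forall>z\<in>\<Omega>. 1 \<le> (fst z, - snd z) \<bullet> pq)"
      unfolding pq by (simp add: algebra_simps)
    finally show ?thesis .
  qed
  then show ?thesis by blast
qed

lemma antipolar_convex: "convex (antipolar \<Omega>)"
  unfolding antipolar_eq by (intro convex_INT ballI convex_halfspace_ge)

lemma antipolar_closed: "closed (antipolar \<Omega>)"
  unfolding antipolar_eq by (intro closed_INT ballI closed_halfspace_ge)

lemma antipolar_two: "w \<in> antipolar \<Omega> \<Longrightarrow> 2 *\<^sub>R w \<in> antipolar \<Omega>"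
  unfolding antipolar_def
proof (cases w, clarsimp)
  fix p q x y assume "\<forall>(x, y)\<in>\<Omega>. 1 \<le> p * x - q * y" "(x,y) \<in> \<Omega>"
  then have "1 \<le> p * x - q * y" by auto
  then show "1 \<le> 2 * p * x - 2 * q * y" by linarith
qed

lemma antipolar_nz: "\<Omega> \<noteq> {} \<Longrightarrow> w \<in> antipolar \<Omega> \<Longrightarrow> w \<noteq> 0"
  unfolding antipolar_def by (auto simp: zero_prod_def)



theorem lemma3:
  fixes \<Omega> :: "(real \<times> real) set" and w :: "real \<times> real"
  assumes "\<Omega> \<noteq> {}" and "convex \<Omega>" and "closed \<Omega>" and "(0, 0) \<notin> \<Omega>"
    and "\<forall>t::real. t > 1 \<longrightarrow> scaleR t ` \<Omega> \<subseteq> \<Omega>"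
    and "\<exists>a b c. c > 0 \<and> (\<forall>(x, y) \<in> \<Omega>. a * x + b * y \<ge> c)"
    and "w \<in> antipolar \<Omega>"
  shows "(\<forall>\<gamma> :: real \<Rightarrow> real \<times> real.
            \<gamma> C1_differentiable_on {-1<..<1} \<and> \<gamma> 0 = w
            \<and> vector_derivative \<gamma> (at 0) \<notin> {c *\<^sub>R w | c. True}
            \<and> (\<exists>\<delta>>0. \<forall>\<alpha>\<in>{0<..<\<delta>}.
                  (1 - \<alpha>) *\<^sub>R w \<in> antipolar \<Omega> \<and> \<gamma> (-\<alpha>) \<in> antipolar \<Omega> \<and> \<gamma> \<alpha> \<in> antipolar \<Omega>)
            \<longrightarrow> w \<in> interior (antipolar \<Omega>))
       \<and> ((\<exists>\<gamma> :: real \<Rightarrow> real \<times> real.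
            \<gamma> C1_differentiable_on {-1<..<1} \<and> \<gamma> 0 = w
            \<and> vector_derivative \<gamma> (at 0) \<notin> {c *\<^sub>R w | c. True}
            \<and> \<not> (\<exists>\<delta>>0. \<forall>\<alpha>\<in>{0<..<\<delta>}.
                  (1 - \<alpha>) *\<^sub>R w \<in> antipolar \<Omega> \<and> \<gamma> (-\<alpha>) \<in> antipolar \<Omega> \<and> \<gamma> \<alpha> \<in> antipolar \<Omega>))
            \<longrightarrow> w \<in> frontier (antipolar \<Omega>))"

proof (intro conjI allI impI)
  let ?A = "antipolar \<Omega>"
  have cvx: "convex ?A" by (rule antipolar_convex)
  have wnz: "w \<noteq> 0" using antipolar_nz assms(1,7) by blast
  fix \<gamma> :: "real \<Rightarrow> real \<times> real"
  assume H: "\<gamma> C1_differentiable_on {-1<..<1} \<and> \<gamma> 0 = w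
            \<and> vector_derivative \<gamma> (at 0) \<notin> {c *\<^sub>R w | c. True}
            \<and> (\<exists>\<delta>>0. \<forall>\<alpha>\<in>{0<..<\<delta>}.
                  (1 - \<alpha>) *\<^sub>R w \<in> antipolar \<Omega> \<and> \<gamma> (-\<alpha>) \<in> antipolar \<Omega> \<and> \<gamma> \<alpha> \<in> antipolar \<Omega>)"
  then obtain D where D: "\<And>x. x \<in> {-1<..<1} \<Longrightarrow> (\<gamma> has_vector_derivative D x) (at x)"
    unfolding C1_differentiable_on_def by blast
  have D0: "(\<gamma> has_vector_derivative D 0) (at 0)" using D by simp
  then have vd: "vector_derivative \<gamma> (at 0) = D 0" by (rule vector_derivative_at)
  from H obtain \<delta> where dpos: "\<delta> > 0" and dA: "\<And>\<alpha>. \<alpha>\<in>{0<..<\<delta>} \<Longrightarrow>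
                  (1 - \<alpha>) *\<^sub>R w \<in> ?A \<and> \<gamma> (-\<alpha>) \<in> ?A \<and> \<gamma> \<alpha> \<in> ?A" by blast
  have g0: "\<gamma> 0 = w" using H by blast
  show "w \<in> interior ?A"
  proof (rule ccontr)
    assume "w \<notin> interior ?A"
    then obtain a where anz: "a \<noteq> 0" and sup: "\<And>y. y \<in> ?A \<Longrightarrow> a \<bullet> w \<le> a \<bullet> y"
      using support[OF cvx assms(7)] by blast
    define \<alpha>0 where "\<alpha>0 = min (\<delta>/2) (1/2)"
    have a0: "\<alpha>0 \<in> {0<..<\<delta>}" using dpos unfolding \<alpha>0_def by auto
    have "a \<bullet> w \<le> a \<bullet> ((1 - \<alpha>0) *\<^sub>R w)" using sup dA[OF a0] by blast
    then have "\<alpha>0 * (a \<bullet> w) \<le> 0" by (simp add: algebra_simps)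
    moreover have "\<alpha>0 > 0" using a0 by simp
    ultimately have le: "a \<bullet> w \<le> 0" by (simp add: mult_le_0_iff)
    have "a \<bullet> w \<le> a \<bullet> (2 *\<^sub>R w)" using sup antipolar_two[OF assms(7)] by blast
    then have "a \<bullet> w \<ge> 0" by simp
    with le have aw: "a \<bullet> w = 0" by simp
    have der: "((\<lambda>t. a \<bullet> \<gamma> t) has_real_derivative a \<bullet> D 0) (at 0)"
      by (rule deriv_inner[OF D0])
    have "\<forall>y. \<bar>0 - y\<bar> < \<delta> \<longrightarrow> a \<bullet> \<gamma> 0 \<le> a \<bullet> \<gamma> y"
    proof (intro allI impI)
      fix y :: real assume y: "\<bar>0 - y\<bar> < \<delta>"
      consider "y = 0" | "y > 0" | "y < 0" by linarith
      then show "a \<bullet> \<gamma> 0 \<le> a \<bullet> \<gamma> y"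
      proof cases
        case 2 then have "\<gamma> y \<in> ?A" using dA[of y] y by auto
        then show ?thesis using sup g0 by simp
      next
        case 3 then have "\<gamma> (- (-y)) \<in> ?A" using dA[of "-y"] y by auto
        then show ?thesis using sup g0 by simp
      qed simp
    qed
    then have aD: "a \<bullet> D 0 = 0" using DERIV_local_min[OF der dpos] by blast
    obtain a1 a2 where ae: "a = (a1,a2)" by (cases a)
    obtain w1 w2 where we: "w = (w1,w2)" by (cases w)
    obtain v1 v2 where ve: "D 0 = (v1,v2)" by (cases "D 0")
    have "\<exists>c. (v1,v2) = c *\<^sub>R (w1,w2)"
    proof (rule parallel2)
      show "a1 * w1 + a2 * w2 = 0" using aw ae we by simp
      show "a1 * v1 + a2 * v2 = 0" using aD ae ve by simp
      show "(a1, a2) \<noteq> 0" using anz ae by simp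
      show "(w1, w2) \<noteq> 0" using wnz we by simp
    qed
    then obtain c where "(v1,v2) = c *\<^sub>R (w1,w2)" by blast
    then have "D 0 = c *\<^sub>R w" using ve we by simp
    then have "vector_derivative \<gamma> (at 0) \<in> {c *\<^sub>R w | c. True}" using vd by auto
    moreover have "vector_derivative \<gamma> (at 0) \<notin> {c *\<^sub>R w | c. True}" using H by blast
    ultimately show False by blast
  qed
next
  let ?A = "antipolar \<Omega>"
  assume "\<exists>\<gamma> :: real \<Rightarrow> real \<times> real.
            \<gamma> C1_differentiable_on {-1<..<1} \<and> \<gamma> 0 = w
            \<and> vector_derivative \<gamma> (at 0) \<notin> {c *\<^sub>R w | c. True}
            \<and> \<not> (\<exists>\<delta>>0. \<forall>\<alpha>\<in>{0<..<\<delta>}.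
                  (1 - \<alpha>) *\<^sub>R w \<in> antipolar \<Omega> \<and> \<gamma> (-\<alpha>) \<in> antipolar \<Omega> \<and> \<gamma> \<alpha> \<in> antipolar \<Omega>)"
  then obtain \<gamma> :: "real \<Rightarrow> real \<times> real" where H: "\<gamma> C1_differentiable_on {-1<..<1}" "\<gamma> 0 = w"
     "\<not> (\<exists>\<delta>>0. \<forall>\<alpha>\<in>{0<..<\<delta>}.
                  (1 - \<alpha>) *\<^sub>R w \<in> ?A \<and> \<gamma> (-\<alpha>) \<in> ?A \<and> \<gamma> \<alpha> \<in> ?A)" by blast
  then obtain D where D: "\<And>x. x \<in> {-1<..<1} \<Longrightarrow> (\<gamma> has_vector_derivative D x) (at x)"
    unfolding C1_differentiable_on_def by blast
  have D0: "(\<gamma> has_vector_derivative D 0) (at 0)" using D by simp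
  then have cont: "continuous (at 0) \<gamma>" by (rule has_vector_derivative_continuous)
  have "w \<notin> interior ?A"
  proof
    assume "w \<in> interior ?A"
    then obtain e where e: "e > 0" "ball w e \<subseteq> ?A" using mem_interior by blast
    obtain d where d: "d > 0" "\<And>t. dist t 0 < d \<Longrightarrow> dist (\<gamma> t) (\<gamma> 0) < e"
      using cont e(1) unfolding continuous_at_eps_delta by blast
    define \<delta> where "\<delta> = min d (e / (norm w + 1))"
    have "\<delta> > 0" proof -
      have "0 < norm w + 1" using norm_ge_zero[of w] by linarith
      then show ?thesis using d e unfolding \<delta>_def by simp
    qed
    moreover have "\<forall>\<alpha>\<in>{0<..<\<delta>}. (1 - \<alpha>) *\<^sub>R w \<in> ?A \<and> \<gamma> (-\<alpha>) \<in> ?A \<and> \<gamma> \<alpha> \<in> ?A"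
    proof
      fix \<alpha> assume a: "\<alpha> \<in> {0<..<\<delta>}"
      have ad: "\<alpha> < d" "\<alpha> > 0" using a unfolding \<delta>_def by auto
      have "dist (\<gamma> (-\<alpha>)) w < e" "dist (\<gamma> \<alpha>) w < e"
        using d(2)[of "-\<alpha>"] d(2)[of \<alpha>] ad H(2) by (simp_all add: dist_real_def)
      moreover have "dist ((1 - \<alpha>) *\<^sub>R w) w < e"
      proof -
        have "dist ((1 - \<alpha>) *\<^sub>R w) w = \<alpha> * norm w"
          using a by (simp add: dist_norm algebra_simps)
        also have "\<dots> \<le> \<alpha> * (norm w + 1)" using a by (simp add: mult_left_mono)
        also have "\<dots> < e"
        proof -
          have "\<alpha> < e / (norm w + 1)" using a unfolding \<delta>_def by auto
          moreover have p: "0 < norm w + 1" using norm_ge_zero[of w] by linarith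
          ultimately show ?thesis using pos_less_divide_eq[OF p] by blast
        qed
        finally show ?thesis .
      qed
      moreover have inA: "x \<in> ?A" if "dist x w < e" for x
      proof -
        have "x \<in> ball w e" using that by (simp add: mem_ball dist_commute)
        then show ?thesis using e(2) by blast
      qed
      ultimately show "(1 - \<alpha>) *\<^sub>R w \<in> ?A \<and> \<gamma> (-\<alpha>) \<in> ?A \<and> \<gamma> \<alpha> \<in> ?A"
        by blast
    qed
    ultimately show False using H(3) by blast
  qed
  moreover have "w \<in> closure ?A" using assms(7) closure_subset by blast
  ultimately show "w \<in> frontier ?A" by (simp add: frontier_def)
qed

end
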